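(* For all $n\geq 1$ and $m\geq 2$, $s_{n,m}(122,312)=(n-1)m+1$.
   Context: $[n]_m=\{1^m,\ldots,n^m\}$; a permutation of $[n]_m$ is a sequence of length $nm$ in which each element of $[n]$ appears exactly $m$ times. A sequence avoids a pattern $\pi$ if it has no subsequence order-isomorphic to $\pi$ (same relative order and same equalities among entries). $s_{n,m}(\Pi)$ is the number of permutations of $[n]_m$ avoiding all patterns in $\Pi$. *)

theory Defs
  imports Main
begin

definition multiperm :: "nat \<Rightarrow> nat \<Rightarrow> nat list \<Rightarrow> bool" where
  "multiperm n m w \<longleftrightarrow> length w = n * m \<and> set w \<subseteq> {1..n} \<and>
     (\<forall>i\<in>{1..n}. count_list w i = m)"

definition order_iso :: "nat list \<Rightarrow> nat list \<Rightarrow> bool" where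
  "order_iso u v \<longleftrightarrow> length u = length v \<and>
     (\<forall>i<length u. \<forall>j<length u. (u!i < u!j \<longleftrightarrow> v!i < v!j) \<and> (u!i = u!j \<longleftrightarrow> v!i = v!j))"

definition contains :: "nat list \<Rightarrow> nat list \<Rightarrow> bool" where
  "contains w p \<longleftrightarrow> (\<exists>f. strict_mono_on {..<length p} f \<and> (\<forall>i<length p. f i < length w) \<and>
     order_iso (map (\<lambda>i. w ! f i) [0..<length p]) p)"

definition avoids :: "nat list \<Rightarrow> nat list \<Rightarrow> bool" where
  "avoids w p \<longleftrightarrow> \<not> contains w p"

definition s_count :: "nat \<Rightarrow> nat \<Rightarrow> nat list set \<Rightarrow> nat" where
  "s_count n m Pi = card {w. multiperm n m w \<and> (\<forall>p\<in>Pi. avoids w p)}"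

end

theory Submission
  imports Defs "HOL-Library.Multiset"
begin


lemma contains3: "contains w [a,b,c] \<longleftrightarrow>
  (\<exists>i j k. i<j \<and> j<k \<and> k<length w \<and> order_iso [w!i,w!j,w!k] [a,b,c])"
proof
  assume "contains w [a,b,c]"
  then obtain f where f: "strict_mono_on {..<length [a,b,c]} f" "\<forall>i<length [a,b,c]. f i < length w"
    "order_iso (map (\<lambda>i. w ! f i) [0..<length [a,b,c]]) [a,b,c]" unfolding contains_def by blast
  have "f 0 < f 1" "f 1 < f 2" using f(1) unfolding strict_mono_on_def by auto
  moreover have "f 2 < length w" using f(2) by auto
  moreover have "map (\<lambda>i. w ! f i) [0..<length [a,b,c]] = [w!f 0, w!f 1, w!f 2]" by (simp add: upt_rec numeral_2_eq_2)
  ultimately show "\<exists>i j k. i<j \<and> j<k \<and> k<length w \<and> order_iso [w!i,w!j,w!k] [a,b,c]"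
    using f(3) by metis
next
  assume "\<exists>i j k. i<j \<and> j<k \<and> k<length w \<and> order_iso [w!i,w!j,w!k] [a,b,c]"
  then obtain i j k where h: "i<j" "j<k" "k<length w" "order_iso [w!i,w!j,w!k] [a,b,c]" by blast
  define f where "f = (\<lambda>x::nat. if x=0 then i else if x=1 then j else k)"
  have "strict_mono_on {..<3} f" using h unfolding strict_mono_on_def f_def by auto
  moreover have "\<forall>x<3. f x < length w" using h unfolding f_def by auto
  moreover have "map (\<lambda>x. w ! f x) [0..<3] = [w!i,w!j,w!k]" by (simp add: upt_rec f_def)
  moreover have len3: "length [a,b,c] = 3" by simp
  ultimately show "contains w [a,b,c]" unfolding contains_def using h(4) by metis
qed

lemma oi122: "order_iso [x,y,z] [1,2,2] \<longleftrightarrow> x<y \<and> y=z"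
  unfolding order_iso_def by (auto simp: less_Suc_eq numeral_eq_Suc)

lemma oi312: "order_iso [x,y,z] [3,1,2] \<longleftrightarrow> y<z \<and> z<x"
  unfolding order_iso_def by (auto simp: less_Suc_eq numeral_eq_Suc)



lemma avoid122: "avoids w [1,2,2] \<longleftrightarrow> \<not>(\<exists>i j k. i<j \<and> j<k \<and> k<length w \<and> w!i<w!j \<and> w!j=w!k)"
  unfolding avoids_def contains3 oi122 by blast
lemma avoid312: "avoids w [3,1,2] \<longleftrightarrow> \<not>(\<exists>i j k. i<j \<and> j<k \<and> k<length w \<and> w!j<w!k \<and> w!k<w!i)"
  unfolding avoids_def contains3 oi312 by blast

lemma two_idx: "2 \<le> count_list xs a \<Longrightarrow> \<exists>j k. j<k \<and> k<length xs \<and> xs!j = a \<and> xs!k = a"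
proof (induction xs)
  case Nil then show ?case by simp
next
  case (Cons x xs)
  show ?case
  proof (cases "x = a")
    case True
    then have "count_list xs a \<noteq> 0" using Cons.prems by simp
    then have "a \<in> set xs" using count_list_0_iff by metis
    then obtain t where "t < length xs" "xs!t = a" by (metis in_set_conv_nth)
    then show ?thesis using True by (intro exI[of _ 0] exI[of _ "Suc t"]) auto
  next
    case False
    then obtain j k where "j<k \<and> k<length xs \<and> xs!j = a \<and> xs!k = a" using Cons by auto
    then show ?thesis by (intro exI[of _ "Suc j"] exI[of _ "Suc k"]) auto
  qed
qed

lemma desc_eq:
  assumes "sorted_wrt (\<ge>) a" "sorted_wrt (\<ge>) (b::nat list)" "\<And>x. count_list a x = count_list b x"
  shows "a = b"
proof -
  have sa: "sorted (rev a)" "sorted (rev b)" using assms(1,2) by (simp_all add: sorted_wrt_rev)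
  have "mset (rev a) = mset (rev b)" using assms(3) by (simp add: multiset_eq_iff count_mset)
  then have "sort (rev b) = rev a" using properties_for_sort sa by blast
  moreover have "sort (rev b) = rev b" using sa by (simp add: sorted_sort_id)
  ultimately show ?thesis by simp
qed

lemma nth_ins: "i < Suc (length xs + length ys) \<Longrightarrow> i \<noteq> length xs \<Longrightarrow>
   (xs @ x # ys)!i = (xs@ys)!(if i < length xs then i else i - 1)"
proof (cases "i < length xs")
  case True then show ?thesis by (simp add: nth_append)
next
  case False
  assume "i \<noteq> length xs"
  with False have "i - length xs = Suc (i - Suc (length xs))" "\<not> i - 1 < length xs" by auto
  then show ?thesis using False by (simp add: nth_append)
qed

fun dec :: "nat \<Rightarrow> nat \<Rightarrow> nat list" where
  "dec m 0 = []" | "dec m (Suc k) = replicate m (Suc k) @ dec m k"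

lemma dec_length: "length (dec m k) = k*m" by (induction k) auto
lemma dec_set: "set (dec m k) \<subseteq> {1..k}" by (induction k) auto
lemma dec_count: "count_list (dec m k) x = (if 1 \<le> x \<and> x \<le> k then m else 0)"
proof (induction k)
  case 0 then show ?case by simp
next
  case (Suc k)
  have "count_list (replicate m (Suc k)) x = (if x = Suc k then m else 0)"
    by (induction m) auto
  then show ?case using Suc by auto
qed
lemma dec_sorted: "sorted_wrt (\<ge>) (dec m k)"
proof (induction k)
  case 0 then show ?case by simp
next
  case (Suc k)
  have "sorted_wrt (\<ge>) (replicate m (Suc k))" by (induction m) auto
  then show ?case using Suc dec_set[of m k] by (auto simp: sorted_wrt_append)
qed



lemma count_list_replicate_self: "xs = replicate l a \<Longrightarrow> count_list xs a = l"
  by (induction l arbitrary: xs) auto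

lemma rep_sorted: "sorted_wrt (\<ge>) (replicate l (a::nat))" by (induction l) auto
lemma rep_count: "count_list (replicate l a) x = (if x = a then l else 0)" by (induction l) auto

lemma asc:
  assumes mp: "multiperm n m w" and m2: "m \<ge> 2" and a1: "avoids w [1,2,2]" and a2: "avoids w [3,1,2]"
    and ij: "i<j" "j<length w" "w!i < w!j"
  shows "w!j = n"
proof (rule ccontr)
  assume ne: "w!j \<noteq> n"
  have sw: "set w \<subseteq> {1..n}" using mp unfolding multiperm_def by auto
  have "w!j \<in> set w" using ij by simp
  then have jn: "w!j < n" "1 \<le> n" using sw ne by auto
  then have "count_list w n = m" using mp unfolding multiperm_def by auto
  then obtain p q where pq: "p<q" "q<length w" "w!p = n" "w!q = n" using two_idx m2 by metis
  consider "p < i" | "p = i" | "i < p" by linarith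
  then show False
  proof cases
    case 1
    then have "p<i \<and> i<j \<and> j<length w \<and> w!i<w!j \<and> w!j<w!p" using ij pq jn by simp
    then show False using a2 unfolding avoid312 by blast
  next
    case 2 then show False using ij pq jn by simp
  next
    case 3
    then have "i<p \<and> p<q \<and> q<length w \<and> w!i<w!p \<and> w!p=w!q" using ij pq jn by simp
    then show False using a1 unfolding avoid122 by blast
  qed
qed

definition g :: "nat \<Rightarrow> nat \<Rightarrow> nat \<Rightarrow> nat list" where
  "g n m k = replicate (m-1) n @ take k (dec m (n-1)) @ n # drop k (dec m (n-1))"

lemma dir2:
  assumes mp: "multiperm n m w" and m2: "m \<ge> 2" and n1: "n \<ge> 1"
    and a1: "avoids w [1,2,2]" and a2: "avoids w [3,1,2]"
  shows "\<exists>k \<le> (n-1)*m. w = g n m k"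
proof -
  define D where "D = dec m (n-1)"
  define R where "R = replicate (m-1) n"
  have cw: "count_list w x = (if 1 \<le> x \<and> x \<le> n then m else 0)" for x
  proof -
    have "set w \<subseteq> {1..n}" using mp unfolding multiperm_def by auto
    then show ?thesis using mp unfolding multiperm_def by (auto intro!: count_notin)
  qed
  have "count_list w n \<noteq> 0" using cw n1 m2 by simp
  then have "n \<in> set w" using count_list_0_iff by metis
  then obtain xs ys where w: "w = xs @ n # ys" and nys: "n \<notin> set ys" using split_list_last by metis
  define v where "v = xs @ ys"
  have sw: "set w \<subseteq> {1..n}" using mp unfolding multiperm_def by auto
  have vsort: "sorted_wrt (\<ge>) v"
    unfolding sorted_wrt_iff_nth_less
  proof (intro allI impI)
    fix i j assume ij: "i < j" "j < length v"
    show "v!j \<le> v!i"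
    proof (rule ccontr)
      assume "\<not> v!j \<le> v!i"
      then have lt: "v!i < v!j" by simp
      define \<phi> where "\<phi> = (\<lambda>t. if t < length xs then t else Suc t)"
      have vw: "v!t = w!(\<phi> t)" if "t < length v" for t
      proof -
        have "\<phi> t < Suc (length xs + length ys)" "\<phi> t \<noteq> length xs"
          using that unfolding \<phi>_def v_def by auto
        then have "w!(\<phi> t) = v!(if \<phi> t < length xs then \<phi> t else \<phi> t - 1)"
          unfolding w v_def by (rule nth_ins)
        then show ?thesis unfolding \<phi>_def by auto
      qed
      have "\<phi> i < \<phi> j" "\<phi> j < length w" using ij unfolding \<phi>_def v_def w by auto
      then have wj: "w!(\<phi> j) = n" using asc[OF mp m2 a1 a2] lt vw ij by auto
      have jx: "j < length xs"
      proof (rule ccontr)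
        assume "\<not> j < length xs"
        then have "v!j = ys!(j - length xs)" unfolding v_def by (simp add: nth_append)
        moreover have "j - length xs < length ys" using ij \<open>\<not> j < length xs\<close> unfolding v_def by auto
        ultimately have "v!j \<in> set ys" by simp
        then show False using nys wj vw ij by auto
      qed
      then have "w!i < w!j" "w!j = w!(length xs)" "i < j" "j < length xs" "length xs < length w"
        using lt vw ij wj unfolding \<phi>_def w by (auto simp: nth_append)
      then show False using a1 unfolding avoid122 by blast
    qed
  qed
  have Rsort: "sorted_wrt (\<ge>) (R @ D)"
  proof -
    have "sorted_wrt (\<ge>) R" unfolding R_def by (rule rep_sorted)
    moreover have "\<forall>y\<in>set D. y \<le> n" using dec_set[of m "n-1"] unfolding D_def by fastforce
    ultimately show ?thesis using dec_sorted[of m "n-1"] unfolding D_def R_def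
      by (auto simp: sorted_wrt_append)
  qed
  have cR: "count_list R x = (if x = n then m-1 else 0)" for x
    unfolding R_def by (rule rep_count)
  have cnt: "count_list v x = count_list (R @ D) x" for x
  proof -
    have "count_list w x = count_list v x + (if x = n then 1 else 0)"
      unfolding w v_def by auto
    then show ?thesis using cw[of x] cR[of x] dec_count[of m "n-1" x] m2 n1 unfolding D_def
      by (auto split: if_splits)
  qed
  have veq: "v = R @ D" using desc_eq[OF vsort Rsort cnt] .
  have cxs: "count_list xs n = m - 1"
    using cw[of n] n1 nys unfolding w by simp
  have lR: "length R = m - 1" unfolding R_def by simp
  have lx: "length xs \<ge> m - 1"
  proof (rule ccontr)
    assume "\<not> length xs \<ge> m - 1"
    then have "xs = take (length xs) (R @ D)" using veq unfolding v_def by (metis append_eq_conv_conj)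
    also have "\<dots> = replicate (length xs) n" using \<open>\<not> length xs \<ge> m - 1\<close> unfolding R_def by simp
    finally have "count_list xs n = length xs" by (metis count_list_replicate_self)
    then show False using cxs \<open>\<not> length xs \<ge> m - 1\<close> by simp
  qed
  define k where "k = length xs - (m - 1)"
  have "xs = take (length xs) (R @ D)" using veq unfolding v_def by (metis append_eq_conv_conj)
  then have xs: "xs = R @ take k D" using lx lR unfolding k_def by simp
  have "ys = drop (length xs) (R @ D)" using veq unfolding v_def by (metis append_eq_conv_conj)
  then have ys: "ys = drop k D" using lx lR unfolding k_def by simp
  have "length xs \<le> length (R @ D)" using veq unfolding v_def by (metis length_append le_add1)
  then have "k \<le> (n-1)*m" using lR dec_length[of m "n-1"] unfolding k_def D_def by simp
  moreover have "w = g n m k" unfolding g_def w xs ys R_def D_def by simp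
  ultimately show ?thesis by blast
qed



lemma dir1:
  assumes m2: "m \<ge> 2" and n1: "n \<ge> 1" and k: "k \<le> (n-1)*m"
  shows "multiperm n m (g n m k) \<and> avoids (g n m k) [1,2,2] \<and> avoids (g n m k) [3,1,2]"
proof -
  define D where "D = dec m (n-1)"
  define R where "R = replicate (m-1) n"
  define xs where "xs = R @ take k D"
  define ys where "ys = drop k D"
  define w where "w = g n m k"
  have w: "w = xs @ n # ys" unfolding w_def g_def xs_def ys_def R_def D_def by simp
  have lD: "length D = (n-1)*m" unfolding D_def by (simp add: dec_length)
  have sD: "set D \<subseteq> {1..n-1}" unfolding D_def by (rule dec_set)
  have nD: "n \<notin> set D" using sD n1 by auto
  have lxs: "length xs = m - 1 + k" unfolding xs_def R_def using k lD by simp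
  have v: "xs @ ys = R @ D" unfolding xs_def ys_def by simp
  have lw: "length w = n * m"
  proof -
    have "length w = m - 1 + k + 1 + ((n-1)*m - k)" unfolding w using lxs lD ys_def by simp
    also have "\<dots> = m + (n-1)*m" using k m2 by simp
    also have "\<dots> = n*m" using n1 by (cases n) auto
    finally show ?thesis .
  qed
  have setw: "set w \<subseteq> {1..n}"
  proof -
    have "set w = set R \<union> {n} \<union> set D" unfolding w using v
      by (metis Un_insert_right set_append set_simps(2) sup_bot.right_neutral sup_commute sup_left_commute)
    moreover have "set D \<subseteq> {1..n}" using sD by fastforce
    ultimately show ?thesis using n1 unfolding R_def by auto
  qed
  have cntw: "count_list w x = count_list R x + count_list D x + (if x = n then 1 else 0)" for x
  proof -
    have "count_list w x = count_list (xs @ ys) x + (if x = n then 1 else 0)" unfolding w by simp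
    then show ?thesis using v by simp
  qed
  have mp: "multiperm n m w"
    unfolding multiperm_def
  proof (intro conjI ballI)
    show "length w = n*m" by (rule lw)
    show "set w \<subseteq> {1..n}" by (rule setw)
    fix i assume i: "i \<in> {1..n}"
    show "count_list w i = m"
      using cntw[of i] rep_count[of "m-1" n i] dec_count[of m "n-1" i] i m2 unfolding R_def D_def
      by auto
  qed
  have vsort: "sorted_wrt (\<ge>) (xs @ ys)"
  proof -
    have "\<forall>y\<in>set D. y \<le> n" using sD by fastforce
    then show ?thesis using v rep_sorted[of "m-1" n] dec_sorted[of m "n-1"] unfolding D_def R_def
      by (auto simp: sorted_wrt_append)
  qed
  have wle: "w!t \<le> n" if "t < length w" for t using setw that nth_mem by fastforce
  have asc': "j = length xs" if ij: "i < j" "j < length w" "w!i < w!j" for i j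
  proof (rule ccontr)
    assume jne: "j \<noteq> length xs"
    have ine: "i \<noteq> length xs"
    proof
      assume "i = length xs"
      then have "w!i = n" unfolding w by simp
      then show False using wle[of j] ij by simp
    qed
    define \<psi> where "\<psi> = (\<lambda>t. if t < length xs then t else t - 1)"
    have wv: "w!t = (xs@ys)!(\<psi> t)" if "t < length w" "t \<noteq> length xs" for t
      using nth_ins[of t xs ys n] that unfolding w \<psi>_def by simp
    have "\<psi> i \<le> \<psi> j" "\<psi> j < length (xs @ ys)" using ij jne ine unfolding \<psi>_def w by auto
    moreover have "(xs@ys)!(\<psi> i) < (xs@ys)!(\<psi> j)" using wv ij jne ine by auto
    ultimately show False using vsort unfolding sorted_wrt_iff_nth_less
      by (metis le_neq_implies_less less_imp_le_nat not_le order.strict_implies_not_eq)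
  qed
  have aftn: "w!l \<noteq> n" if "length xs < l" "l < length w" for l
  proof -
    have "w!l = ys!(l - length xs - 1)" using that unfolding w
      by (simp add: nth_append)
    moreover have "l - length xs - 1 < length ys" using that unfolding w by auto
    ultimately have "w!l \<in> set D" unfolding ys_def by (metis in_set_dropD nth_mem)
    then show ?thesis using nD by auto
  qed
  have a1: "avoids w [1,2,2]" unfolding avoid122
  proof
    assume "\<exists>i j l. i<j \<and> j<l \<and> l<length w \<and> w!i<w!j \<and> w!j=w!l"
    then obtain i j l where h: "i<j" "j<l" "l<length w" "w!i<w!j" "w!j=w!l" by blast
    then have "j = length xs" using asc' by auto
    then have "w!j = n" unfolding w by simp
    then show False using aftn[of l] h \<open>j = length xs\<close> by simp
  qed
  have a2: "avoids w [3,1,2]" unfolding avoid312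
  proof
    assume "\<exists>i j l. i<j \<and> j<l \<and> l<length w \<and> w!j<w!l \<and> w!l<w!i"
    then obtain i j l where h: "i<j" "j<l" "l<length w" "w!j<w!l" "w!l<w!i" by blast
    then have "l = length xs" using asc' by auto
    then have "w!l = n" unfolding w by simp
    then show False using wle[of i] h by simp
  qed
  show ?thesis using mp a1 a2 unfolding w_def by simp
qed

lemma g_inj:
  assumes m2: "m \<ge> 2" and n1: "n \<ge> 1"
  shows "inj_on (g n m) {0..(n-1)*m}"
proof -
  have key: "g n m k \<noteq> g n m k'" if "k < k'" "k' \<le> (n-1)*m" for k k'
  proof
    assume eq: "g n m k = g n m k'"
    define D where "D = dec m (n-1)"
    have lD: "length D = (n-1)*m" unfolding D_def by (simp add: dec_length)
    have nD: "n \<notin> set D" using dec_set[of m "n-1"] n1 unfolding D_def by auto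
    have "g n m k' ! (m - 1 + k') = n" unfolding g_def D_def[symmetric] using that lD
      by (simp add: nth_append)
    moreover have "g n m k ! (m - 1 + k') \<in> set D"
    proof -
      have "g n m k ! (m - 1 + k') = drop k D ! (k' - k - 1)" unfolding g_def D_def[symmetric]
        using that lD by (simp add: nth_append)
      moreover have "k' - k - 1 < length (drop k D)" using that lD by auto
      ultimately show ?thesis by (metis in_set_dropD nth_mem)
    qed
    ultimately show False using eq nD by simp
  qed
  show ?thesis unfolding inj_on_def
    by (metis atLeastAtMost_iff key linorder_neqE_nat)
qed


theorem theorem7:
  fixes n m :: nat
  assumes "n \<ge> 1" and "m \<ge> 2"
  shows "s_count n m {[1,2,2],[3,1,2]} = (n - 1) * m + 1"
proof -
  have "{w. multiperm n m w \<and> (\<forall>p\<in>{[1,2,2],[3,1,2]}. avoids w p)} = g n m ` {0..(n-1)*m}"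
  proof
    show "{w. multiperm n m w \<and> (\<forall>p\<in>{[1,2,2],[3,1,2]}. avoids w p)} \<subseteq> g n m ` {0..(n-1)*m}"
      using dir2 assms by fastforce
    show "g n m ` {0..(n-1)*m} \<subseteq> {w. multiperm n m w \<and> (\<forall>p\<in>{[1,2,2],[3,1,2]}. avoids w p)}"
      using dir1 assms by auto
  qed
  then have "s_count n m {[1,2,2],[3,1,2]} = card (g n m ` {0..(n-1)*m})" unfolding s_count_def by simp
  also have "\<dots> = card {0..(n-1)*m}" using card_image g_inj assms by blast
  finally show ?thesis by simp
qed

end
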